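(* Let $\mathcal{H}$ be a complex Hilbert space of finite dimension $n\ge2$, $m\ge2$, $\mathcal{G}=(\{1,\dots,m\},E)$ a connected undirected graph, $\alpha\in(0,1)$, and $\sigma$ a self-adjoint operator on $\mathcal{H}$. Consider the quantum gossip algorithm: at each time $t$ an edge $(j,k)\in E$ is selected and $\rho(t+1)=(1-\alpha)\rho(t)+\alpha U_{(j,k)}\rho(t)U_{(j,k)}^\dagger$, where edges are selected either by periodically cycling through all edges, or independently at random according to a fixed distribution $\{q_{j,k}>0\}$ (in which case one considers either the expected evolution $\rho(t+1)=\sum q_{j,k}\big((1-\alpha)\rho(t)+\alpha U_{(j,k)}\rho(t)U_{(j,k)}^\dagger\big)$ or individual random trajectories). Let $z_\ell(t)=\mathrm{Tr}(\rho(t)\sigma^{(\ell)})$. Then under each of these edge-selection strategies, for every $\ell\in\{1,\dots,m\}$, $z_\ell(t)$ asymptotically converges to $\frac1m\sum_{k=1}^m z_k(0)$ (for random trajectories, in the sense that for any $\delta,\varepsilon>0$ there is $T$ with $\mathbb{P}[\sum_\ell |z_\ell(T)-\bar z|^2>\varepsilon\sum_\ell|z_\ell(0)-\bar z|^2]<\delta$, where $\bar z=\frac1m\sum_k z_k(0)$).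
   Context: For $X$ an operator on $\mathcal{H}$, $X^{(i)}=I^{\otimes(i-1)}\otimes X\otimes I^{\otimes(m-i)}$; $U_{(j,k)}$ is the unitary on $\mathcal{H}^{\otimes m}$ swapping tensor factors $j$ and $k$. *)

theory Defs
  imports "HOL-Probability.Probability" "HOL-Combinatorics.Transposition"
begin

text \<open>Operators on H^(tensor m), H = C^n (with a fixed orthonormal basis), represented by
  their matrix entries with respect to the product basis |a> where a ranges over
  functions {..<m} -> {..<n}. Tensor factors are indexed 0..m-1.\<close>

type_synonym cop = "(nat \<Rightarrow> nat) \<Rightarrow> (nat \<Rightarrow> nat) \<Rightarrow> complex"

definition idx :: "nat \<Rightarrow> nat \<Rightarrow> (nat \<Rightarrow> nat) set" where
  "idx m n = ({..<m} \<rightarrow>\<^sub>E {..<n})"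

definition mmul :: "(nat \<Rightarrow> nat) set \<Rightarrow> cop \<Rightarrow> cop \<Rightarrow> cop" where
  "mmul I A B = (\<lambda>a c. \<Sum>b\<in>I. A a b * B b c)"

definition adj :: "cop \<Rightarrow> cop" where
  "adj A = (\<lambda>a b. cnj (A b a))"

definition tr :: "(nat \<Rightarrow> nat) set \<Rightarrow> cop \<Rightarrow> complex" where
  "tr I A = (\<Sum>a\<in>I. A a a)"

text \<open>The swap unitary U_(j,k): U |b> = |b o (j k)>.\<close>
definition swap_op :: "nat \<Rightarrow> nat \<Rightarrow> cop" where
  "swap_op j k = (\<lambda>a b. if a = b \<circ> Transposition.transpose j k then 1 else 0)"

text \<open>X^(i) = I \<otimes> ... \<otimes> X \<otimes> ... \<otimes> I, X acting on factor i.\<close>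
definition local_op :: "nat \<Rightarrow> (nat \<Rightarrow> nat \<Rightarrow> complex) \<Rightarrow> nat \<Rightarrow> cop" where
  "local_op m X i = (\<lambda>a b. X (a i) (b i) *
      (\<Prod>l\<in>{..<m} - {i}. if a l = b l then 1 else 0))"

definition self_adjoint_mat :: "nat \<Rightarrow> (nat \<Rightarrow> nat \<Rightarrow> complex) \<Rightarrow> bool" where
  "self_adjoint_mat n X \<longleftrightarrow> (\<forall>a<n. \<forall>b<n. X a b = cnj (X b a))"

definition density_op :: "(nat \<Rightarrow> nat) set \<Rightarrow> cop \<Rightarrow> bool" where
  "density_op I \<rho> \<longleftrightarrow>
     (\<forall>a\<in>I. \<forall>b\<in>I. \<rho> a b = cnj (\<rho> b a)) \<and>
     (\<forall>v :: (nat \<Rightarrow> nat) \<Rightarrow> complex.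
        0 \<le> Re (\<Sum>a\<in>I. \<Sum>b\<in>I. cnj (v a) * \<rho> a b * v b)) \<and>
     tr I \<rho> = 1"

text \<open>Undirected graph on vertices {..<m}: each edge {j,k} stored once as (j,k) with j<k.\<close>
definition connected_graph :: "nat \<Rightarrow> (nat \<times> nat) set \<Rightarrow> bool" where
  "connected_graph m E \<longleftrightarrow>
     E \<subseteq> {(j,k). j < k \<and> k < m} \<and> (\<forall>u<m. \<forall>v<m. (u,v) \<in> (E \<union> E\<inverse>)\<^sup>*)"

definition gossip_step :: "(nat \<Rightarrow> nat) set \<Rightarrow> real \<Rightarrow> nat \<Rightarrow> nat \<Rightarrow> cop \<Rightarrow> cop" where
  "gossip_step I \<alpha> j k \<rho> = (\<lambda>a b. of_real (1 - \<alpha>) * \<rho> a b +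
      of_real \<alpha> * mmul I (mmul I (swap_op j k) \<rho>) (adj (swap_op j k)) a b)"

primrec traj :: "(nat \<Rightarrow> nat) set \<Rightarrow> real \<Rightarrow> cop \<Rightarrow> (nat \<Rightarrow> nat \<times> nat) \<Rightarrow> nat \<Rightarrow> cop" where
  "traj I \<alpha> \<rho>0 w 0 = \<rho>0"
| "traj I \<alpha> \<rho>0 w (Suc t) = gossip_step I \<alpha> (fst (w t)) (snd (w t)) (traj I \<alpha> \<rho>0 w t)"

primrec exp_traj :: "(nat \<Rightarrow> nat) set \<Rightarrow> real \<Rightarrow> (nat \<times> nat \<Rightarrow> real) \<Rightarrow> (nat \<times> nat) set
                     \<Rightarrow> cop \<Rightarrow> nat \<Rightarrow> cop" where
  "exp_traj I \<alpha> q E \<rho>0 0 = \<rho>0"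
| "exp_traj I \<alpha> q E \<rho>0 (Suc t) = (\<lambda>a b. \<Sum>e\<in>E. of_real (q e) *
      gossip_step I \<alpha> (fst e) (snd e) (exp_traj I \<alpha> q E \<rho>0 t) a b)"

definition zval :: "nat \<Rightarrow> nat \<Rightarrow> (nat \<Rightarrow> nat \<Rightarrow> complex) \<Rightarrow> cop \<Rightarrow> nat \<Rightarrow> complex" where
  "zval m n \<sigma> \<rho> l = tr (idx m n) (mmul (idx m n) \<rho> (local_op m \<sigma> l))"

end

theory Submission
  imports Defs
begin


lemma finite_idx[simp]: "finite (idx m n)"
  unfolding idx_def by (intro finite_PiE) auto

lemma transpose_less: "j < m \<Longrightarrow> k < m \<Longrightarrow> i < m \<Longrightarrow> Transposition.transpose j k i < m"
  by (simp add: Transposition.transpose_def)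

lemma comp_transpose_idx:
  assumes "a \<in> idx m n" "j < m" "k < m"
  shows "a \<circ> Transposition.transpose j k \<in> idx m n"
  using assms transpose_less[OF assms(2,3)] unfolding idx_def
  by (auto simp: PiE_def Pi_def extensional_def Transposition.transpose_def)

lemma comp_transpose_eq_iff:
  "(a = c \<circ> Transposition.transpose j k) \<longleftrightarrow> (c = a \<circ> Transposition.transpose j k)"
  by (auto simp: comp_assoc)

lemma if_comp_transpose:
  "(if a = c \<circ> Transposition.transpose j k then x else y) = (if c = a \<circ> Transposition.transpose j k then x else y)"
  using comp_transpose_eq_iff by metis

lemma mmul_swap_left:
  assumes "a \<in> idx m n" "j < m" "k < m"
  shows "mmul (idx m n) (swap_op j k) \<rho> a d = \<rho> (a \<circ> Transposition.transpose j k) d"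
proof -
  have "mmul (idx m n) (swap_op j k) \<rho> a d
      = (\<Sum>c\<in>idx m n. if c = a \<circ> Transposition.transpose j k then \<rho> c d else 0)"
    unfolding mmul_def swap_op_def
    apply (intro sum.cong refl)
    subgoal for c using comp_transpose_eq_iff[of a c j k] by simp
    done
  also have "\<dots> = \<rho> (a \<circ> Transposition.transpose j k) d"
    using comp_transpose_idx[OF assms] by simp
  finally show ?thesis .
qed

lemma mmul_swap_right:
  assumes "b \<in> idx m n" "j < m" "k < m"
  shows "mmul (idx m n) \<rho> (adj (swap_op j k)) a b = \<rho> a (b \<circ> Transposition.transpose j k)"
proof -
  have "mmul (idx m n) \<rho> (adj (swap_op j k)) a b
      = (\<Sum>c\<in>idx m n. if c = b \<circ> Transposition.transpose j k then \<rho> a c else 0)"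
    unfolding mmul_def swap_op_def adj_def
    apply (intro sum.cong refl)
    subgoal for c using comp_transpose_eq_iff[of b c j k] by simp
    done
  also have "\<dots> = \<rho> a (b \<circ> Transposition.transpose j k)"
    using comp_transpose_idx[OF assms] by simp
  finally show ?thesis .
qed

lemma conj_swap:
  assumes "a \<in> idx m n" "b \<in> idx m n" "j < m" "k < m"
  shows "mmul (idx m n) (mmul (idx m n) (swap_op j k) \<rho>) (adj (swap_op j k)) a b
       = \<rho> (a \<circ> Transposition.transpose j k) (b \<circ> Transposition.transpose j k)"
  using assms by (simp add: mmul_swap_right mmul_swap_left)

lemma zval_alt:
  "zval m n \<sigma> \<rho> l = (\<Sum>a\<in>idx m n. \<Sum>b\<in>idx m n. \<rho> a b * local_op m \<sigma> l b a)"
  unfolding zval_def tr_def mmul_def by simp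

lemma local_op_transpose:
  assumes "j < m" "k < m" "l < m"
  shows "local_op m \<sigma> l (b \<circ> Transposition.transpose j k) (a \<circ> Transposition.transpose j k)
       = local_op m \<sigma> (Transposition.transpose j k l) b a"
proof -
  let ?t = "Transposition.transpose j k"
  have bij: "bij_betw ?t ({..<m} - {l}) ({..<m} - {?t l})"
  proof (rule bij_betw_byWitness[where f'="?t"])
    show "\<forall>a\<in>{..<m} - {l}. ?t (?t a) = a" by simp
    show "\<forall>a\<in>{..<m} - {?t l}. ?t (?t a) = a" by simp
    show "?t ` ({..<m} - {l}) \<subseteq> {..<m} - {?t l}"
    proof
      fix y assume "y \<in> ?t ` ({..<m} - {l})"
      then obtain x where x: "x < m" "x \<noteq> l" "y = ?t x" by auto
      have "?t x \<noteq> ?t l" using x(2) transpose_eq_imp_eq by metis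
      then show "y \<in> {..<m} - {?t l}" using x transpose_less[OF assms(1,2)] by simp
    qed
    show "?t ` ({..<m} - {?t l}) \<subseteq> {..<m} - {l}"
    proof
      fix y assume "y \<in> ?t ` ({..<m} - {?t l})"
      then obtain x where x: "x < m" "x \<noteq> ?t l" "y = ?t x" by auto
      have "?t x \<noteq> l" using x(2) by auto
      then show "y \<in> {..<m} - {l}" using x transpose_less[OF assms(1,2)] by simp
    qed
  qed
  have "(\<Prod>i\<in>{..<m} - {l}. if b (?t i) = a (?t i) then 1 else (0::complex))
      = (\<Prod>i\<in>{..<m} - {?t l}. if b i = a i then 1 else 0)"
    using prod.reindex_bij_betw[OF bij, of "\<lambda>i. if b i = a i then 1 else (0::complex)"] by simp
  then show ?thesis unfolding local_op_def by simp
qed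

lemma bij_comp_transpose:
  assumes "j < m" "k < m"
  shows "bij_betw (\<lambda>a. a \<circ> Transposition.transpose j k) (idx m n) (idx m n)"
proof (rule bij_betw_byWitness[where f' = "\<lambda>a. a \<circ> Transposition.transpose j k"])
qed (auto simp: comp_assoc comp_transpose_idx assms)

lemma sum_idx_reindex:
  assumes "j < m" "k < m"
  shows "(\<Sum>b\<in>idx m n. g (b \<circ> Transposition.transpose j k)) = (\<Sum>b\<in>idx m n. g b)"
  using sum.reindex_bij_betw[OF bij_comp_transpose[OF assms], of g] .

lemma zval_gossip:
  assumes "j < m" "k < m" "l < m"
  shows "zval m n \<sigma> (gossip_step (idx m n) \<alpha> j k \<rho>) l
       = of_real (1 - \<alpha>) * zval m n \<sigma> \<rho> l + of_real \<alpha> * zval m n \<sigma> \<rho> (Transposition.transpose j k l)"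
proof -
  let ?t = "Transposition.transpose j k"
  let ?I = "idx m n"
  let ?L = "local_op m \<sigma>"
  have "zval m n \<sigma> (gossip_step ?I \<alpha> j k \<rho>) l
      = (\<Sum>a\<in>?I. \<Sum>b\<in>?I. (of_real (1 - \<alpha>) * \<rho> a b + of_real \<alpha> * \<rho> (a \<circ> ?t) (b \<circ> ?t)) * ?L l b a)"
    unfolding zval_alt gossip_step_def
    by (intro sum.cong refl) (simp add: conj_swap assms)
  also have "\<dots> = of_real (1 - \<alpha>) * (\<Sum>a\<in>?I. \<Sum>b\<in>?I. \<rho> a b * ?L l b a)
      + of_real \<alpha> * (\<Sum>a\<in>?I. \<Sum>b\<in>?I. \<rho> (a \<circ> ?t) (b \<circ> ?t) * ?L l b a)"
    by (simp add: distrib_right sum.distrib sum_distrib_left mult.assoc)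
  also have "(\<Sum>a\<in>?I. \<Sum>b\<in>?I. \<rho> (a \<circ> ?t) (b \<circ> ?t) * ?L l b a)
      = (\<Sum>a\<in>?I. \<Sum>b\<in>?I. \<rho> a b * ?L l (b \<circ> ?t) (a \<circ> ?t))"
  proof -
    have "(\<Sum>a\<in>?I. \<Sum>b\<in>?I. \<rho> (a \<circ> ?t) (b \<circ> ?t) * ?L l b a)
        = (\<Sum>a\<in>?I. \<Sum>b\<in>?I. \<rho> (a \<circ> ?t) b * ?L l (b \<circ> ?t) a)"
    proof (rule sum.cong[OF refl])
      fix a assume "a \<in> ?I"
      show "(\<Sum>b\<in>?I. \<rho> (a \<circ> ?t) (b \<circ> ?t) * ?L l b a) = (\<Sum>b\<in>?I. \<rho> (a \<circ> ?t) b * ?L l (b \<circ> ?t) a)"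
        using sum_idx_reindex[OF assms(1,2), of "\<lambda>b. \<rho> (a \<circ> ?t) b * ?L l (b \<circ> ?t) a" n]
        by (simp add: comp_assoc)
    qed
    also have "\<dots> = (\<Sum>a\<in>?I. \<Sum>b\<in>?I. \<rho> a b * ?L l (b \<circ> ?t) (a \<circ> ?t))"
      using sum_idx_reindex[OF assms(1,2), of "\<lambda>a. \<Sum>b\<in>?I. \<rho> a b * ?L l (b \<circ> ?t) (a \<circ> ?t)" n]
      by (simp add: comp_assoc)
    finally show ?thesis .
  qed
  finally show ?thesis
    by (simp add: zval_alt local_op_transpose assms)
qed



definition upd :: "real \<Rightarrow> nat \<Rightarrow> nat \<Rightarrow> (nat \<Rightarrow> complex) \<Rightarrow> nat \<Rightarrow> complex" where
  "upd \<alpha> j k x = (\<lambda>l. of_real (1 - \<alpha>) * x l + of_real \<alpha> * x (Transposition.transpose j k l))"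

definition Phi :: "nat \<Rightarrow> complex \<Rightarrow> (nat \<Rightarrow> complex) \<Rightarrow> real" where
  "Phi m c x = (\<Sum>l<m. (cmod (x l - c))\<^sup>2)"

definition mean :: "nat \<Rightarrow> (nat \<Rightarrow> complex) \<Rightarrow> complex" where
  "mean m x = (\<Sum>l<m. x l) / of_nat m"


lemma bij_transpose_lessThan:
  assumes "j < m" "k < m"
  shows "bij_betw (Transposition.transpose j k) {..<m} {..<m}"
  by (rule bij_betw_byWitness[where f'="Transposition.transpose j k"])
     (auto simp: transpose_less assms)

lemma sum_transpose:
  assumes "j < m" "k < m"
  shows "(\<Sum>l<m. x (Transposition.transpose j k l)) = (\<Sum>l<m. x l)"
  using sum.reindex_bij_betw[OF bij_transpose_lessThan[OF assms], of x] .

lemma upd_sum: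
  assumes "j < m" "k < m"
  shows "(\<Sum>l<m. upd \<alpha> j k x l) = (\<Sum>l<m. x l)"
proof -
  have "(\<Sum>l<m. upd \<alpha> j k x l) = of_real (1 - \<alpha>) * (\<Sum>l<m. x l) + of_real \<alpha> * (\<Sum>l<m. x (Transposition.transpose j k l))"
    by (simp add: upd_def sum.distrib sum_distrib_left)
  also have "\<dots> = (\<Sum>l<m. x l)"
    by (simp add: sum_transpose assms algebra_simps)
  finally show ?thesis .
qed

lemma upd_mean: "j < m \<Longrightarrow> k < m \<Longrightarrow> mean m (upd \<alpha> j k x) = mean m x"
  by (simp add: mean_def upd_sum)

lemma two_point:
  fixes a b :: complex and \<alpha> :: real
  shows "(cmod (of_real (1-\<alpha>) * a + of_real \<alpha> * b))\<^sup>2 + (cmod (of_real (1-\<alpha>) * b + of_real \<alpha> * a))\<^sup>2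
       = (cmod a)\<^sup>2 + (cmod b)\<^sup>2 - 2 * \<alpha> * (1 - \<alpha>) * (cmod (a - b))\<^sup>2"
  unfolding cmod_power2 by (simp add: power2_eq_square algebra_simps)

lemma Phi_upd:
  assumes "j < m" "k < m" "j \<noteq> k"
  shows "Phi m c (upd \<alpha> j k x) = Phi m c x - 2 * \<alpha> * (1 - \<alpha>) * (cmod (x j - x k))\<^sup>2"
proof -
  let ?R = "{..<m} - {j} - {k}"
  have split: "(\<Sum>l<m. f l) = f j + f k + (\<Sum>l\<in>?R. f l)" for f :: "nat \<Rightarrow> real"
  proof -
    have "(\<Sum>l<m. f l) = f j + (\<Sum>l\<in>{..<m} - {j}. f l)"
      using assms by (simp add: sum.remove)
    also have "(\<Sum>l\<in>{..<m} - {j}. f l) = f k + (\<Sum>l\<in>?R. f l)"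
      using assms by (simp add: sum.remove)
    finally show ?thesis by simp
  qed
  have rest: "(\<Sum>l\<in>?R. (cmod (upd \<alpha> j k x l - c))\<^sup>2) = (\<Sum>l\<in>?R. (cmod (x l - c))\<^sup>2)"
    by (intro sum.cong refl) (auto simp: upd_def algebra_simps)
  have uj: "upd \<alpha> j k x j - c = of_real (1-\<alpha>) * (x j - c) + of_real \<alpha> * (x k - c)"
    by (simp add: upd_def algebra_simps)
  have uk: "upd \<alpha> j k x k - c = of_real (1-\<alpha>) * (x k - c) + of_real \<alpha> * (x j - c)"
    by (simp add: upd_def algebra_simps)
  have "Phi m c (upd \<alpha> j k x) = (cmod (upd \<alpha> j k x j - c))\<^sup>2 + (cmod (upd \<alpha> j k x k - c))\<^sup>2
          + (\<Sum>l\<in>?R. (cmod (x l - c))\<^sup>2)"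
    unfolding Phi_def split[of "\<lambda>l. (cmod (upd \<alpha> j k x l - c))\<^sup>2"] rest ..
  also have "(cmod (upd \<alpha> j k x j - c))\<^sup>2 + (cmod (upd \<alpha> j k x k - c))\<^sup>2
      = (cmod (x j - c))\<^sup>2 + (cmod (x k - c))\<^sup>2 - 2 * \<alpha> * (1 - \<alpha>) * (cmod (x j - x k))\<^sup>2"
    unfolding uj uk two_point by simp
  finally show ?thesis
    unfolding Phi_def split[of "\<lambda>l. (cmod (x l - c))\<^sup>2"] by simp
qed

lemma upd_move:
  assumes "0 \<le> \<alpha>"
  shows "cmod (upd \<alpha> j k x i - x i) \<le> \<alpha> * cmod (x j - x k)"
proof -
  have eq: "upd \<alpha> j k x i - x i = of_real \<alpha> * (x (Transposition.transpose j k i) - x i)"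
    by (simp add: upd_def algebra_simps)
  have "cmod (x (Transposition.transpose j k i) - x i) \<le> cmod (x j - x k)"
    by (cases "i = j"; cases "i = k") (auto simp: norm_minus_commute)
  then show ?thesis unfolding eq using assms
    by (simp add: norm_mult mult_left_mono)
qed

lemma relpow_bound:
  assumes "\<forall>e\<in>E. cmod (x (fst e) - x (snd e)) \<le> D"
  shows "(u, v) \<in> (E \<union> E\<inverse>) ^^ n \<Longrightarrow> cmod (x u - x v) \<le> real n * D"
proof (induction n arbitrary: v)
  case 0
  then show ?case by simp
next
  case (Suc n)
  then obtain w where uw: "(u, w) \<in> (E \<union> E\<inverse>) ^^ n" and wv: "(w, v) \<in> E \<union> E\<inverse>"
    by (auto elim: relpow_Suc_E)
  have "cmod (x w - x v) \<le> D"
    using wv assms by (auto simp: norm_minus_commute)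
  moreover have "cmod (x u - x w) \<le> real n * D" using Suc.IH[OF uw] .
  moreover have "cmod (x u - x v) \<le> cmod (x u - x w) + cmod (x w - x v)"
    using norm_triangle_ineq[of "x u - x w" "x w - x v"] by simp
  ultimately show ?case by (simp add: algebra_simps)
qed

lemma finite_graph: "connected_graph m E \<Longrightarrow> finite E"
  unfolding connected_graph_def
  by (rule finite_subset[of _ "{..<m} \<times> {..<m}"]) auto

lemma graph_edge: "connected_graph m E \<Longrightarrow> e \<in> E \<Longrightarrow> fst e < snd e \<and> snd e < m"
  unfolding connected_graph_def by auto

lemma graph_nonempty: "connected_graph m E \<Longrightarrow> 2 \<le> m \<Longrightarrow> E \<noteq> {}"
  unfolding connected_graph_def
  by (metis empty_iff less_2_cases_iff rtrancl_empty pair_in_Id_conv sup_bot.right_neutral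
      converse_empty less_le_trans one_less_numeral_iff semiring_norm(76) zero_neq_one)

lemma K_bound:
  assumes conn: "connected_graph m E" and m: "0 < m"
    and bnd: "\<forall>e\<in>E. cmod (x (fst e) - x (snd e)) \<le> D" and D: "0 \<le> D"
  shows "Phi m (mean m x) x \<le> real m * (real (card (E \<union> E\<inverse>)) * D)\<^sup>2"
proof -
  let ?R = "E \<union> E\<inverse>"
  let ?N = "card ?R"
  have finR: "finite ?R" using finite_graph[OF conn] by simp
  have pair: "cmod (x u - x v) \<le> real ?N * D" if "u < m" "v < m" for u v
  proof -
    have "(u, v) \<in> ?R\<^sup>*" using conn that unfolding connected_graph_def by blast
    then obtain k where k: "k \<le> ?N" "(u, v) \<in> ?R ^^ k"
      using rtrancl_finite_eq_relpow[OF finR] by blast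
    have "cmod (x u - x v) \<le> real k * D" using relpow_bound[OF bnd k(2)] .
    also have "\<dots> \<le> real ?N * D" using k(1) D by (simp add: mult_right_mono)
    finally show ?thesis .
  qed
  have dev: "cmod (x u - mean m x) \<le> real ?N * D" if "u < m" for u
  proof -
    have "x u - mean m x = (\<Sum>v<m. (x u - x v)) / of_nat m"
      using m by (simp add: mean_def sum_subtractf field_simps)
    then have "cmod (x u - mean m x) = cmod (\<Sum>v<m. (x u - x v)) / real m"
      by (simp add: norm_divide)
    also have "\<dots> \<le> (\<Sum>v<m. cmod (x u - x v)) / real m"
      using m by (intro divide_right_mono norm_sum) auto
    also have "\<dots> \<le> (\<Sum>v<m. real ?N * D) / real m"
      using m pair[OF that] by (intro divide_right_mono sum_mono) auto
    also have "\<dots> = real ?N * D" using m by simp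
    finally show ?thesis .
  qed
  have "Phi m (mean m x) x \<le> (\<Sum>u<m. (real ?N * D)\<^sup>2)"
    unfolding Phi_def by (intro sum_mono power_mono) (auto simp: dev)
  then show ?thesis by simp
qed

lemma jensen_sq:
  fixes a :: "'e \<Rightarrow> real"
  assumes "finite A" "\<forall>e\<in>A. 0 \<le> q e" "(\<Sum>e\<in>A. q e) = 1"
  shows "(\<Sum>e\<in>A. q e * a e)\<^sup>2 \<le> (\<Sum>e\<in>A. q e * (a e)\<^sup>2)"
proof -
  define s where "s = (\<Sum>e\<in>A. q e * a e)"
  have "0 \<le> (\<Sum>e\<in>A. q e * (a e - s)\<^sup>2)"
    using assms by (intro sum_nonneg) auto
  also have "(\<Sum>e\<in>A. q e * (a e - s)\<^sup>2) = (\<Sum>e\<in>A. q e * (a e)\<^sup>2) - 2 * s * (\<Sum>e\<in>A. q e * a e) + s\<^sup>2 * (\<Sum>e\<in>A. q e)"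
    by (simp add: power2_diff algebra_simps sum.distrib sum_subtractf sum_distrib_left) (simp add: sum_distrib_right)
  finally show ?thesis using assms(3) unfolding s_def[symmetric] by (simp add: power2_eq_square)
qed

lemma cmod_avg_sq:
  assumes "finite A" "\<forall>e\<in>A. 0 \<le> q e" "(\<Sum>e\<in>A. q e) = 1"
  shows "(cmod (\<Sum>e\<in>A. of_real (q e) * y e))\<^sup>2 \<le> (\<Sum>e\<in>A. q e * (cmod (y e))\<^sup>2)"
proof -
  have "cmod (\<Sum>e\<in>A. of_real (q e) * y e) \<le> (\<Sum>e\<in>A. cmod (of_real (q e) * y e))"
    by (rule norm_sum)
  also have "\<dots> = (\<Sum>e\<in>A. q e * cmod (y e))"
    using assms(2) by (intro sum.cong refl) (simp add: norm_mult)
  finally have "(cmod (\<Sum>e\<in>A. of_real (q e) * y e))\<^sup>2 \<le> (\<Sum>e\<in>A. q e * cmod (y e))\<^sup>2"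
    by (intro power_mono) auto
  also have "\<dots> \<le> (\<Sum>e\<in>A. q e * (cmod (y e))\<^sup>2)"
    by (rule jensen_sq[OF assms])
  finally show ?thesis .
qed

lemma Phi_avg:
  assumes "finite A" "\<forall>e\<in>A. 0 \<le> q e" "(\<Sum>e\<in>A. q e) = 1"
  shows "Phi m c (\<lambda>l. \<Sum>e\<in>A. of_real (q e) * y e l) \<le> (\<Sum>e\<in>A. q e * Phi m c (y e))"
proof -
  have eq: "(\<Sum>e\<in>A. of_real (q e) * y e l) - c = (\<Sum>e\<in>A. of_real (q e) * (y e l - c))" for l
  proof -
    have "(\<Sum>e\<in>A. of_real (q e) * (y e l - c)) = (\<Sum>e\<in>A. of_real (q e) * y e l) - (\<Sum>e\<in>A. of_real (q e)) * c"
      by (simp add: algebra_simps sum_subtractf sum_distrib_right sum_distrib_left)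
    also have "(\<Sum>e\<in>A. of_real (q e)) = (1::complex)"
      using assms(3) by (simp flip: of_real_sum)
    finally show ?thesis by simp
  qed
  have "Phi m c (\<lambda>l. \<Sum>e\<in>A. of_real (q e) * y e l)
      = (\<Sum>l<m. (cmod (\<Sum>e\<in>A. of_real (q e) * (y e l - c)))\<^sup>2)"
    unfolding Phi_def eq ..
  also have "\<dots> \<le> (\<Sum>l<m. \<Sum>e\<in>A. q e * (cmod (y e l - c))\<^sup>2)"
    by (intro sum_mono cmod_avg_sq[OF assms])
  also have "\<dots> = (\<Sum>e\<in>A. q e * Phi m c (y e))"
    unfolding Phi_def by (subst sum.swap) (simp add: sum_distrib_left)
  finally show ?thesis .
qed

definition kappa :: "nat \<Rightarrow> (nat \<times> nat) set \<Rightarrow> real \<Rightarrow> real \<Rightarrow> real" where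
  "kappa m E \<alpha> p = 2 * \<alpha> * (1 - \<alpha>) * p / (real m * (real (card (E \<union> E\<inverse>)))\<^sup>2)"

lemma kappa_pos:
  assumes "connected_graph m E" "2 \<le> m" "0 < \<alpha>" "\<alpha> < 1" "0 < p"
  shows "0 < kappa m E \<alpha> p"
proof -
  have "E \<noteq> {}" using graph_nonempty assms by blast
  moreover have "finite (E \<union> E\<inverse>)" using finite_graph[OF assms(1)] by simp
  ultimately have "card (E \<union> E\<inverse>) > 0" by (auto simp: card_gt_0_iff)
  then show ?thesis using assms unfolding kappa_def by (auto intro!: divide_pos_pos mult_pos_pos)
qed

lemma Phi_bound_by_edges:
  assumes conn: "connected_graph m E" and m: "2 \<le> m"
  shows "Phi m (mean m x) x \<le> real m * (real (card (E \<union> E\<inverse>)))\<^sup>2 * (\<Sum>e\<in>E. (cmod (x (fst e) - x (snd e)))\<^sup>2)"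
proof -
  let ?S = "\<Sum>e\<in>E. (cmod (x (fst e) - x (snd e)))\<^sup>2"
  have finE: "finite E" using finite_graph[OF conn] .
  have S0: "0 \<le> ?S" by (intro sum_nonneg) auto
  have "\<forall>e\<in>E. cmod (x (fst e) - x (snd e)) \<le> sqrt ?S"
  proof
    fix e assume "e \<in> E"
    then have "(cmod (x (fst e) - x (snd e)))\<^sup>2 \<le> ?S"
      using finE by (intro member_le_sum) auto
    then show "cmod (x (fst e) - x (snd e)) \<le> sqrt ?S"
      using real_le_rsqrt by blast
  qed
  from K_bound[OF conn _ this] m S0
  have "Phi m (mean m x) x \<le> real m * (real (card (E \<union> E\<inverse>)) * sqrt ?S)\<^sup>2" by simp
  also have "\<dots> = real m * (real (card (E \<union> E\<inverse>)))\<^sup>2 * ?S"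
    using S0 by (simp add: power_mult_distrib)
  finally show ?thesis .
qed

lemma exp_contract:
  assumes conn: "connected_graph m E" and m: "2 \<le> m" and a: "0 < \<alpha>" "\<alpha> < 1"
    and p: "\<forall>e\<in>E. pmin \<le> p e" "0 < pmin" "(\<Sum>e\<in>E. p e) = 1"
  shows "(\<Sum>e\<in>E. p e * Phi m (mean m x) (upd \<alpha> (fst e) (snd e) x))
      \<le> (1 - kappa m E \<alpha> pmin) * Phi m (mean m x) x"
proof -
  let ?c = "mean m x"
  let ?d = "\<lambda>e. (cmod (x (fst e) - x (snd e)))\<^sup>2"
  let ?S = "\<Sum>e\<in>E. ?d e"
  let ?C = "real m * (real (card (E \<union> E\<inverse>)))\<^sup>2"
  let ?b = "2 * \<alpha> * (1 - \<alpha>)"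
  have finE: "finite E" using finite_graph[OF conn] .
  have b0: "0 \<le> ?b" using a by simp
  have "(\<Sum>e\<in>E. p e * Phi m ?c (upd \<alpha> (fst e) (snd e) x)) = (\<Sum>e\<in>E. p e * (Phi m ?c x - ?b * ?d e))"
  proof (rule sum.cong[OF refl])
    fix e assume "e \<in> E"
    then have "fst e < m" "snd e < m" "fst e \<noteq> snd e" using graph_edge[OF conn] by fastforce+
    then show "p e * Phi m ?c (upd \<alpha> (fst e) (snd e) x) = p e * (Phi m ?c x - ?b * ?d e)"
      by (simp add: Phi_upd)
  qed
  also have "\<dots> = Phi m ?c x - ?b * (\<Sum>e\<in>E. p e * ?d e)"
  proof -
    have "(\<Sum>e\<in>E. p e * (Phi m ?c x - ?b * ?d e)) = (\<Sum>e\<in>E. p e) * Phi m ?c x - (\<Sum>e\<in>E. ?b * (p e * ?d e))"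
      unfolding right_diff_distrib sum_subtractf sum_distrib_right by (simp add: mult.left_commute)
    also have "(\<Sum>e\<in>E. ?b * (p e * ?d e)) = ?b * (\<Sum>e\<in>E. p e * ?d e)"
      by (simp add: sum_distrib_left)
    finally show ?thesis using p(3) by simp
  qed
  also have "pmin * ?S \<le> (\<Sum>e\<in>E. p e * ?d e)"
    unfolding sum_distrib_left using p(1) by (intro sum_mono mult_right_mono) auto
  then have "Phi m ?c x - ?b * (\<Sum>e\<in>E. p e * ?d e) \<le> Phi m ?c x - ?b * (pmin * ?S)"
    using b0 by (simp add: mult_left_mono)
  also have "?b * (pmin * ?S) \<ge> kappa m E \<alpha> pmin * Phi m ?c x"
  proof -
    have C0: "0 < ?C"
    proof -
      have "E \<noteq> {}" using graph_nonempty conn m by blast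
      moreover have "finite (E \<union> E\<inverse>)" using finE by simp
      ultimately have "card (E \<union> E\<inverse>) > 0" by (auto simp: card_gt_0_iff)
      then show ?thesis using m by simp
    qed
    have "Phi m ?c x \<le> ?C * ?S" using Phi_bound_by_edges[OF conn m] .
    then have "Phi m ?c x / ?C \<le> ?S" using C0 by (simp add: divide_le_eq mult.commute)
    then have "?b * pmin * (Phi m ?c x / ?C) \<le> ?b * pmin * ?S"
      using b0 p(2) by (intro mult_left_mono) auto
    then show ?thesis unfolding kappa_def by (simp add: field_simps)
  qed
  then have "Phi m ?c x - ?b * (pmin * ?S) \<le> Phi m ?c x - kappa m E \<alpha> pmin * Phi m ?c x" by simp
  finally show ?thesis by (simp add: algebra_simps)
qed

lemma conv_lemma:
  assumes "\<And>t. Phi m c (x t) \<le> g t" "g \<longlonglongrightarrow> 0" "l < m"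
  shows "(\<lambda>t. x t l) \<longlonglongrightarrow> c"
proof -
  have "(\<lambda>t. sqrt (g t)) \<longlonglongrightarrow> sqrt 0" by (intro tendsto_intros assms(2))
  then have sq: "(\<lambda>t. sqrt (g t)) \<longlonglongrightarrow> 0" by simp
  have "norm (x t l - c) \<le> sqrt (g t)" for t
  proof -
    have "(cmod (x t l - c))\<^sup>2 \<le> Phi m c (x t)"
      unfolding Phi_def using assms(3) by (intro member_le_sum) auto
    also have "\<dots> \<le> g t" by (rule assms(1))
    finally show ?thesis using real_le_rsqrt by simp
  qed
  then have "(\<lambda>t. x t l - c) \<longlonglongrightarrow> 0"
    by (intro Lim_null_comparison[OF _ sq]) auto
  then show ?thesis by (rule LIM_zero_cancel)
qed

lemma tri3: "cmod (A - B + C) \<le> cmod A + cmod B + cmod (C::complex)"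
proof -
  have "cmod (A - B + C) \<le> cmod (A - B) + cmod C" by (rule norm_triangle_ineq)
  also have "\<dots> \<le> cmod A + cmod B + cmod C" using norm_triangle_ineq4[of A B] by simp
  finally show ?thesis .
qed

locale dyn =
  fixes m :: nat and E :: "(nat \<times> nat) set" and \<alpha> :: real
    and x :: "nat \<Rightarrow> nat \<Rightarrow> complex" and w :: "nat \<Rightarrow> nat \<times> nat"
  assumes conn: "connected_graph m E" and m2: "2 \<le> m" and a0: "0 < \<alpha>" and a1: "\<alpha> < 1"
    and wE: "\<And>t. w t \<in> E"
    and step: "\<And>t. x (Suc t) = upd \<alpha> (fst (w t)) (snd (w t)) (x t)"
begin

definition dd :: "nat \<Rightarrow> real" where
  "dd t = (cmod (x t (fst (w t)) - x t (snd (w t))))\<^sup>2"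

lemma dd_nonneg[simp]: "0 \<le> dd t"
  by (simp add: dd_def)

lemma edge: "fst (w t) < m" "snd (w t) < m" "fst (w t) \<noteq> snd (w t)"
  using graph_edge[OF conn wE[of t]] by auto

lemma Phi_step: "Phi m c (x (Suc t)) = Phi m c (x t) - 2 * \<alpha> * (1 - \<alpha>) * dd t"
  unfolding step dd_def using edge by (simp add: Phi_upd)

lemma Phi_decr: "Phi m c (x (t0 + s)) = Phi m c (x t0) - 2 * \<alpha> * (1 - \<alpha>) * (\<Sum>r<s. dd (t0 + r))"
  by (induction s) (simp_all add: Phi_step algebra_simps)

lemma Phi_mono: "Phi m c (x (t0 + s)) \<le> Phi m c (x t0)"
proof -
  have "0 \<le> 2 * \<alpha> * (1 - \<alpha>) * (\<Sum>r<s. dd (t0 + r))"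
    using a0 a1 by (intro mult_nonneg_nonneg sum_nonneg) (auto simp: dd_def)
  then show ?thesis by (simp add: Phi_decr)
qed

lemma mean_const: "mean m (x t) = mean m (x 0)"
  by (induction t) (simp_all add: step upd_mean edge)

lemma move:
  assumes "\<And>r. r < s \<Longrightarrow> dd (t0 + r) \<le> S" "0 \<le> S"
  shows "cmod (x (t0 + s) i - x t0 i) \<le> real s * sqrt S"
  using assms(1)
proof (induction s)
  case 0
  then show ?case by simp
next
  case (Suc s)
  have "cmod (x (t0 + Suc s) i - x (t0 + s) i) \<le> \<alpha> * sqrt (dd (t0 + s))"
    unfolding dd_def using upd_move[of \<alpha>] a0 by (simp add: step)
  also have "\<dots> \<le> 1 * sqrt S"
    using a0 a1 Suc.prems[of s] by (intro mult_mono) auto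
  finally have A: "cmod (x (t0 + Suc s) i - x (t0 + s) i) \<le> sqrt S" by simp
  have B: "cmod (x (t0 + s) i - x t0 i) \<le> real s * sqrt S" using Suc by auto
  have "cmod (x (t0 + Suc s) i - x t0 i) \<le> cmod (x (t0 + Suc s) i - x (t0 + s) i) + cmod (x (t0 + s) i - x t0 i)"
    using norm_triangle_ineq[of "x (t0 + Suc s) i - x (t0 + s) i" "x (t0 + s) i - x t0 i"] by simp
  with A B show ?case by (simp add: algebra_simps)
qed

definition kW :: "nat \<Rightarrow> real" where
  "kW L = 2 * \<alpha> * (1 - \<alpha>) / (real m * (real (card (E \<union> E\<inverse>)))\<^sup>2 * (2 * real L + 1)\<^sup>2)"

lemma kW_pos: "0 < kW L"
proof -
  have "E \<noteq> {}" using graph_nonempty conn m2 by blast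
  moreover have "finite (E \<union> E\<inverse>)" using finite_graph[OF conn] by simp
  ultimately have "card (E \<union> E\<inverse>) > 0" by (auto simp: card_gt_0_iff)
  then show ?thesis using a0 a1 m2 unfolding kW_def
    by (intro divide_pos_pos mult_pos_pos) auto
qed

lemma window:
  assumes cover: "\<And>e. e \<in> E \<Longrightarrow> \<exists>s<L. w (t0 + s) = e"
  shows "Phi m (mean m (x t0)) (x (t0 + L)) \<le> (1 - kW L) * Phi m (mean m (x t0)) (x t0)"
proof -
  let ?c = "mean m (x t0)"
  let ?S = "\<Sum>r<L. dd (t0 + r)"
  let ?M = "sqrt ?S"
  let ?b = "2 * \<alpha> * (1 - \<alpha>)"
  let ?C = "real m * (real (card (E \<union> E\<inverse>)))\<^sup>2"
  have S0: "0 \<le> ?S" by (intro sum_nonneg) (auto simp: dd_def)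
  have ddS: "dd (t0 + r) \<le> ?S" if "r < L" for r
    using that by (intro member_le_sum) (auto simp: dd_def)
  have mv: "cmod (x (t0 + s) i - x t0 i) \<le> real L * ?M" if "s < L" for s i
  proof -
    have "cmod (x (t0 + s) i - x t0 i) \<le> real s * ?M"
      using that S0 ddS by (intro move) auto
    also have "\<dots> \<le> real L * ?M" using that S0 by (intro mult_right_mono) auto
    finally show ?thesis .
  qed
  have bnd: "\<forall>e\<in>E. cmod (x t0 (fst e) - x t0 (snd e)) \<le> (2 * real L + 1) * ?M"
  proof
    fix e assume "e \<in> E"
    then obtain s where s: "s < L" "w (t0 + s) = e" using cover by blast
    have d: "cmod (x (t0 + s) (fst e) - x (t0 + s) (snd e)) \<le> ?M"
      using ddS[OF s(1)] s(2) unfolding dd_def by (simp add: real_le_rsqrt)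
    have "x t0 (fst e) - x t0 (snd e) = (x (t0 + s) (fst e) - x (t0 + s) (snd e))
       - (x (t0 + s) (fst e) - x t0 (fst e)) + (x (t0 + s) (snd e) - x t0 (snd e))" by simp
    then have "cmod (x t0 (fst e) - x t0 (snd e)) \<le> cmod (x (t0 + s) (fst e) - x (t0 + s) (snd e))
       + cmod (x (t0 + s) (fst e) - x t0 (fst e)) + cmod (x (t0 + s) (snd e) - x t0 (snd e))"
      using tri3 by metis
    also have "\<dots> \<le> ?M + real L * ?M + real L * ?M"
      using d mv[OF s(1)] by (intro add_mono) auto
    finally show "cmod (x t0 (fst e) - x t0 (snd e)) \<le> (2 * real L + 1) * ?M"
      by (simp add: algebra_simps)
  qed
  have "Phi m ?c (x t0) \<le> real m * (real (card (E \<union> E\<inverse>)) * ((2 * real L + 1) * ?M))\<^sup>2"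
    using m2 S0 by (intro K_bound[OF conn _ bnd]) auto
  also have "\<dots> = ?C * (2 * real L + 1)\<^sup>2 * ?S"
    using S0 by (simp add: power_mult_distrib)
  finally have P: "Phi m ?c (x t0) \<le> ?C * (2 * real L + 1)\<^sup>2 * ?S" .
  have "kW L * Phi m ?c (x t0) \<le> ?b * ?S"
  proof -
    have C0: "0 < ?C * (2 * real L + 1)\<^sup>2"
    proof -
      have "E \<noteq> {}" using graph_nonempty conn m2 by blast
      moreover have "finite (E \<union> E\<inverse>)" using finite_graph[OF conn] by simp
      ultimately have "card (E \<union> E\<inverse>) > 0" by (auto simp: card_gt_0_iff)
      then show ?thesis using m2 by (intro mult_pos_pos) auto
    qed
    have "kW L * Phi m ?c (x t0) = ?b * (Phi m ?c (x t0) / (?C * (2 * real L + 1)\<^sup>2))"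
      unfolding kW_def by simp
    also have "\<dots> \<le> ?b * ?S"
      using P C0 a0 a1 by (intro mult_left_mono) (auto simp: divide_le_eq mult.commute)
    finally show ?thesis .
  qed
  then show ?thesis using Phi_decr[of ?c t0 L] by (simp add: algebra_simps)
qed

end



lemma Phi_nonneg[simp]: "0 \<le> Phi m c x"
  unfolding Phi_def by (intro sum_nonneg) auto

definition gz :: "nat \<Rightarrow> nat \<Rightarrow> (nat \<Rightarrow> nat \<Rightarrow> complex) \<Rightarrow> cop \<Rightarrow> nat \<Rightarrow> complex" where
  "gz m n \<sigma> \<rho> = (\<lambda>l. if l < m then zval m n \<sigma> \<rho> l else 0)"

lemma gz_step:
  assumes "j < m" "k < m"
  shows "gz m n \<sigma> (gossip_step (idx m n) \<alpha> j k \<rho>) = upd \<alpha> j k (gz m n \<sigma> \<rho>)"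
proof
  fix l
  show "gz m n \<sigma> (gossip_step (idx m n) \<alpha> j k \<rho>) l = upd \<alpha> j k (gz m n \<sigma> \<rho>) l"
  proof (cases "l < m")
    case True
    then show ?thesis using assms transpose_less[OF assms True]
      by (simp add: gz_def upd_def zval_gossip)
  next
    case False
    then have "Transposition.transpose j k l = l" using assms by (intro transpose_apply_other) auto
    then show ?thesis using False by (simp add: gz_def upd_def)
  qed
qed

lemma Phi_gz: "Phi m c (gz m n \<sigma> \<rho>) = (\<Sum>l<m. (cmod (zval m n \<sigma> \<rho> l - c))\<^sup>2)"
  by (simp add: Phi_def gz_def)

lemma mean_gz: "mean m (gz m n \<sigma> \<rho>) = (\<Sum>k<m. zval m n \<sigma> \<rho> k) / of_nat m"
  by (simp add: mean_def gz_def)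

lemma max_lt1: "0 < k \<Longrightarrow> norm (max (1 - k) 0 :: real) < 1"
  by auto

theorem periodic_part:
  assumes conn: "connected_graph m E" and m2: "2 \<le> m" and a0: "0 < \<alpha>" and a1: "\<alpha> < 1"
    and es: "set es = E"
  shows "\<forall>l<m. (\<lambda>t. zval m n \<sigma> (traj (idx m n) \<alpha> \<rho>0 (\<lambda>s. es ! (s mod length es)) t) l)
                \<longlonglongrightarrow> (\<Sum>k<m. zval m n \<sigma> \<rho>0 k) / of_nat m"
proof (intro allI impI)
  fix l assume l: "l < m"
  define p where "p = length es"
  define w where "w = (\<lambda>s. es ! (s mod p))"
  define x where "x = (\<lambda>t. gz m n \<sigma> (traj (idx m n) \<alpha> \<rho>0 w t))"
  have Ene: "E \<noteq> {}" using graph_nonempty[OF conn m2] .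
  then have p0: "0 < p" using es unfolding p_def by auto
  have wE: "w t \<in> E" for t
    unfolding w_def using es p0 p_def by auto
  have step: "x (Suc t) = upd \<alpha> (fst (w t)) (snd (w t)) (x t)" for t
    using graph_edge[OF conn wE[of t]] unfolding x_def by (simp add: gz_step)
  interpret dyn m E \<alpha> x w
    by unfold_locales (use conn m2 a0 a1 wE step in auto)
  define c where "c = mean m (x 0)"
  define \<mu> where "\<mu> = max (1 - kW p) 0"
  have \<mu>0: "0 \<le> \<mu>" and \<mu>1: "\<mu> < 1" using kW_pos[of p] unfolding \<mu>_def by auto
  have cover: "\<exists>s<p. w (q * p + s) = e" if "e \<in> E" for q e
  proof -
    have "e \<in> set es" using that es by simp
    then obtain i where i: "i < p" "es ! i = e" unfolding p_def in_set_conv_nth by blast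
    have "w (q * p + i) = e" unfolding w_def using i by simp
    then show ?thesis using i by blast
  qed
  have per: "Phi m c (x (q * p)) \<le> \<mu> ^ q * Phi m c (x 0)" for q
  proof (induction q)
    case 0 then show ?case by simp
  next
    case (Suc q)
    have "Phi m c (x (Suc q * p)) = Phi m (mean m (x (q * p))) (x (q * p + p))"
      using mean_const[of "q * p"] unfolding c_def by (simp add: add.commute)
    also have "\<dots> \<le> (1 - kW p) * Phi m (mean m (x (q * p))) (x (q * p))"
      by (rule window) (use cover in auto)
    also have "\<dots> \<le> \<mu> * Phi m c (x (q * p))"
      unfolding mean_const[of "q * p"] c_def[symmetric] \<mu>_def by (intro mult_right_mono) auto
    also have "\<dots> \<le> \<mu> * (\<mu> ^ q * Phi m c (x 0))"
      using Suc \<mu>0 by (intro mult_left_mono) auto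
    finally show ?case by simp
  qed
  have bound: "Phi m c (x t) \<le> \<mu> ^ (t div p) * Phi m c (x 0)" for t
  proof -
    have "Phi m c (x t) = Phi m c (x ((t div p) * p + t mod p))" by simp
    also have "\<dots> \<le> Phi m c (x ((t div p) * p))" by (rule Phi_mono)
    also have "\<dots> \<le> \<mu> ^ (t div p) * Phi m c (x 0)" by (rule per)
    finally show ?thesis .
  qed
  have lim: "(\<lambda>t. \<mu> ^ (t div p) * Phi m c (x 0)) \<longlonglongrightarrow> 0"
  proof -
    have "(\<lambda>t. \<mu> ^ (t div p)) \<longlonglongrightarrow> 0"
      using filterlim_compose[OF LIMSEQ_power_zero[of \<mu>] filterlim_at_top_div_const_nat[OF p0]] \<mu>0 \<mu>1
      by simp
    then show ?thesis by (intro tendsto_mult_left_zero)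
  qed
  have "(\<lambda>t. x t l) \<longlonglongrightarrow> c" by (rule conv_lemma[OF bound lim l])
  moreover have "c = (\<Sum>k<m. zval m n \<sigma> \<rho>0 k) / of_nat m"
    unfolding c_def x_def by (simp add: mean_gz)
  ultimately show "(\<lambda>t. zval m n \<sigma> (traj (idx m n) \<alpha> \<rho>0 (\<lambda>s. es ! (s mod length es)) t) l)
                \<longlonglongrightarrow> (\<Sum>k<m. zval m n \<sigma> \<rho>0 k) / of_nat m"
    using l unfolding x_def w_def p_def gz_def by simp
qed

lemma zval_lin:
  assumes "finite A"
  shows "zval m n \<sigma> (\<lambda>a b. \<Sum>e\<in>A. of_real (q e) * G e a b) l = (\<Sum>e\<in>A. of_real (q e) * zval m n \<sigma> (G e) l)"
proof -
  let ?I = "idx m n"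
  let ?L = "local_op m \<sigma> l"
  have "zval m n \<sigma> (\<lambda>a b. \<Sum>e\<in>A. of_real (q e) * G e a b) l
      = (\<Sum>a\<in>?I. \<Sum>b\<in>?I. \<Sum>e\<in>A. of_real (q e) * (G e a b * ?L b a))"
    unfolding zval_alt by (simp add: sum_distrib_right mult.assoc)
  also have "\<dots> = (\<Sum>a\<in>?I. \<Sum>e\<in>A. \<Sum>b\<in>?I. of_real (q e) * (G e a b * ?L b a))"
    by (rule sum.cong[OF refl], rule sum.swap)
  also have "\<dots> = (\<Sum>e\<in>A. \<Sum>a\<in>?I. \<Sum>b\<in>?I. of_real (q e) * (G e a b * ?L b a))"
    by (rule sum.swap)
  also have "\<dots> = (\<Sum>e\<in>A. of_real (q e) * zval m n \<sigma> (G e) l)"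
    unfolding zval_alt by (simp add: sum_distrib_left)
  finally show ?thesis .
qed

lemma gz_exp_step:
  assumes conn: "connected_graph m E"
  shows "gz m n \<sigma> (exp_traj (idx m n) \<alpha> q E \<rho>0 (Suc t))
       = (\<lambda>l. \<Sum>e\<in>E. of_real (q e) * upd \<alpha> (fst e) (snd e) (gz m n \<sigma> (exp_traj (idx m n) \<alpha> q E \<rho>0 t)) l)"
proof
  fix l
  let ?r = "exp_traj (idx m n) \<alpha> q E \<rho>0 t"
  have finE: "finite E" using finite_graph[OF conn] .
  have "gz m n \<sigma> (exp_traj (idx m n) \<alpha> q E \<rho>0 (Suc t)) l
      = (\<Sum>e\<in>E. of_real (q e) * gz m n \<sigma> (gossip_step (idx m n) \<alpha> (fst e) (snd e) ?r) l)"
    by (cases "l < m") (simp_all add: gz_def zval_lin[OF finE])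
  also have "\<dots> = (\<Sum>e\<in>E. of_real (q e) * upd \<alpha> (fst e) (snd e) (gz m n \<sigma> ?r) l)"
  proof (rule sum.cong[OF refl])
    fix e assume "e \<in> E"
    then have "fst e < m" "snd e < m" using graph_edge[OF conn] by fastforce+
    then show "of_real (q e) * gz m n \<sigma> (gossip_step (idx m n) \<alpha> (fst e) (snd e) ?r) l
             = of_real (q e) * upd \<alpha> (fst e) (snd e) (gz m n \<sigma> ?r) l"
      by (simp add: gz_step)
  qed
  finally show "gz m n \<sigma> (exp_traj (idx m n) \<alpha> q E \<rho>0 (Suc t)) l
       = (\<Sum>e\<in>E. of_real (q e) * upd \<alpha> (fst e) (snd e) (gz m n \<sigma> ?r) l)" .
qed

lemma mean_avg:
  assumes conn: "connected_graph m E" and "(\<Sum>e\<in>E. q e) = 1"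
  shows "mean m (\<lambda>l. \<Sum>e\<in>E. of_real (q e) * upd \<alpha> (fst e) (snd e) y l) = mean m y"
proof -
  have "(\<Sum>l<m. \<Sum>e\<in>E. of_real (q e) * upd \<alpha> (fst e) (snd e) y l)
      = (\<Sum>e\<in>E. of_real (q e) * (\<Sum>l<m. upd \<alpha> (fst e) (snd e) y l))"
    by (subst sum.swap) (simp add: sum_distrib_left)
  also have "\<dots> = (\<Sum>e\<in>E. of_real (q e) * (\<Sum>l<m. y l))"
  proof (rule sum.cong[OF refl])
    fix e assume "e \<in> E"
    then have "fst e < m" "snd e < m" using graph_edge[OF conn] by fastforce+
    then show "of_real (q e) * (\<Sum>l<m. upd \<alpha> (fst e) (snd e) y l) = of_real (q e) * (\<Sum>l<m. y l)"
      by (simp add: upd_sum)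
  qed
  also have "\<dots> = (\<Sum>e\<in>E. of_real (q e)) * (\<Sum>l<m. y l)"
    by (simp add: sum_distrib_right)
  also have "(\<Sum>e\<in>E. of_real (q e)) = (1::complex)"
    using assms(2) by (simp flip: of_real_sum)
  finally show ?thesis unfolding mean_def by simp
qed

theorem expected_part:
  assumes conn: "connected_graph m E" and m2: "2 \<le> m" and a0: "0 < \<alpha>" and a1: "\<alpha> < 1"
    and qpos: "\<forall>e\<in>E. 0 < q e" and qsum: "(\<Sum>e\<in>E. q e) = 1"
  shows "\<forall>l<m. (\<lambda>t. zval m n \<sigma> (exp_traj (idx m n) \<alpha> q E \<rho>0 t) l)
                \<longlonglongrightarrow> (\<Sum>k<m. zval m n \<sigma> \<rho>0 k) / of_nat m"
proof (intro allI impI)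
  fix l assume l: "l < m"
  define y where "y = (\<lambda>t. gz m n \<sigma> (exp_traj (idx m n) \<alpha> q E \<rho>0 t))"
  have finE: "finite E" using finite_graph[OF conn] .
  have Ene: "E \<noteq> {}" using graph_nonempty[OF conn m2] .
  define pmin where "pmin = Min (q ` E)"
  have pmin0: "0 < pmin" unfolding pmin_def using finE Ene qpos by (subst Min_gr_iff) auto
  have pminle: "\<forall>e\<in>E. pmin \<le> q e" unfolding pmin_def using finE by auto
  define c where "c = mean m (y 0)"
  have ystep: "y (Suc t) = (\<lambda>l. \<Sum>e\<in>E. of_real (q e) * upd \<alpha> (fst e) (snd e) (y t) l)" for t
    unfolding y_def by (rule gz_exp_step[OF conn])
  have meanc: "mean m (y t) = c" for t
    unfolding c_def by (induction t) (simp_all add: ystep mean_avg[OF conn qsum])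
  define \<mu> where "\<mu> = max (1 - kappa m E \<alpha> pmin) 0"
  have \<mu>0: "0 \<le> \<mu>" and \<mu>1: "\<mu> < 1" using kappa_pos[OF conn m2 a0 a1 pmin0] unfolding \<mu>_def by auto
  have bound: "Phi m c (y t) \<le> \<mu> ^ t * Phi m c (y 0)" for t
  proof (induction t)
    case 0 then show ?case by simp
  next
    case (Suc t)
    have "Phi m c (y (Suc t)) \<le> (\<Sum>e\<in>E. q e * Phi m c (upd \<alpha> (fst e) (snd e) (y t)))"
      unfolding ystep using finE qpos qsum by (intro Phi_avg) auto
    also have "\<dots> \<le> (1 - kappa m E \<alpha> pmin) * Phi m c (y t)"
      using exp_contract[OF conn m2 a0 a1 pminle pmin0 qsum, of "y t"] meanc[of t] by simp
    also have "\<dots> \<le> \<mu> * Phi m c (y t)"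
      unfolding \<mu>_def by (intro mult_right_mono) auto
    also have "\<dots> \<le> \<mu> * (\<mu> ^ t * Phi m c (y 0))"
      using Suc \<mu>0 by (intro mult_left_mono) auto
    finally show ?case by simp
  qed
  have lim: "(\<lambda>t. \<mu> ^ t * Phi m c (y 0)) \<longlonglongrightarrow> 0"
    using \<mu>0 \<mu>1 by (intro tendsto_mult_left_zero LIMSEQ_power_zero) auto
  have "(\<lambda>t. y t l) \<longlonglongrightarrow> c" by (rule conv_lemma[OF bound lim l])
  moreover have "c = (\<Sum>k<m. zval m n \<sigma> \<rho>0 k) / of_nat m"
    unfolding c_def y_def by (simp add: mean_gz)
  ultimately show "(\<lambda>t. zval m n \<sigma> (exp_traj (idx m n) \<alpha> q E \<rho>0 t) l)
                \<longlonglongrightarrow> (\<Sum>k<m. zval m n \<sigma> \<rho>0 k) / of_nat m"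
    using l unfolding y_def gz_def by simp
qed



lemma traj_cong: "(\<And>s. s < t \<Longrightarrow> w s = w' s) \<Longrightarrow> traj I \<alpha> \<rho> w t = traj I \<alpha> \<rho> w' t"
  by (induction t) auto

abbreviation PP :: "(nat \<times> nat) pmf \<Rightarrow> nat \<Rightarrow> (nat \<Rightarrow> nat \<times> nat) pmf" where
  "PP Q T \<equiv> Pi_pmf {..<T} (0,0) (\<lambda>_. Q)"

lemma PP_support: "f \<in> set_pmf (PP Q T) \<Longrightarrow> t < T \<Longrightarrow> f t \<in> set_pmf Q"
  by (auto simp: set_Pi_pmf PiE_dflt_def)

lemma PP_finite: "finite (set_pmf Q) \<Longrightarrow> finite (set_pmf (PP Q T))"
  by (auto simp: set_Pi_pmf)

lemma prefix_facts:
  assumes conn: "connected_graph m E" and m2: "2 \<le> m" and a0: "0 < \<alpha>" and a1: "\<alpha> < 1"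
    and valid: "\<And>t. t < T \<Longrightarrow> w t \<in> E"
  shows "mean m (gz m n \<sigma> (traj (idx m n) \<alpha> \<rho>0 w T)) = mean m (gz m n \<sigma> \<rho>0)"
    and "Phi m c (gz m n \<sigma> (traj (idx m n) \<alpha> \<rho>0 w T)) \<le> Phi m c (gz m n \<sigma> \<rho>0)"
proof -
  obtain e0 where e0: "e0 \<in> E" using graph_nonempty[OF conn m2] by blast
  define w' where "w' = (\<lambda>t. if t < T then w t else e0)"
  define x where "x = (\<lambda>t. gz m n \<sigma> (traj (idx m n) \<alpha> \<rho>0 w' t))"
  have wE: "w' t \<in> E" for t unfolding w'_def using valid e0 by auto
  have step: "x (Suc t) = upd \<alpha> (fst (w' t)) (snd (w' t)) (x t)" for t
    using graph_edge[OF conn wE[of t]] unfolding x_def by (simp add: gz_step)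
  interpret dyn m E \<alpha> x w'
    by unfold_locales (use conn m2 a0 a1 wE step in auto)
  have eq: "traj (idx m n) \<alpha> \<rho>0 w T = traj (idx m n) \<alpha> \<rho>0 w' T"
    by (rule traj_cong) (simp add: w'_def)
  show "mean m (gz m n \<sigma> (traj (idx m n) \<alpha> \<rho>0 w T)) = mean m (gz m n \<sigma> \<rho>0)"
    using mean_const[of T] unfolding eq x_def by simp
  show "Phi m c (gz m n \<sigma> (traj (idx m n) \<alpha> \<rho>0 w T)) \<le> Phi m c (gz m n \<sigma> \<rho>0)"
    using Phi_mono[of c 0 T] unfolding eq x_def by simp
qed

lemma integral_PP:
  assumes "finite (set_pmf Q)"
  shows "measure_pmf.expectation (PP Q T) g = (\<Sum>f\<in>set_pmf (PP Q T). pmf (PP Q T) f * g f)"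
  by (subst integral_measure_pmf[OF PP_finite[OF assms]]) auto

lemma PP_Suc: "PP Q (Suc T) = map_pmf (\<lambda>(y, f). f(T := y)) (pair_pmf Q (PP Q T))"
  unfolding lessThan_Suc by (rule Pi_pmf_insert) auto

context
  fixes m n :: nat and E :: "(nat \<times> nat) set" and \<alpha> :: real and \<sigma> :: "nat \<Rightarrow> nat \<Rightarrow> complex"
    and \<rho>0 :: cop and Q :: "(nat \<times> nat) pmf"
  assumes conn: "connected_graph m E" and m2: "2 \<le> m" and a0: "0 < \<alpha>" and a1: "\<alpha> < 1"
    and QE: "set_pmf Q = E"
begin

definition G :: "nat \<Rightarrow> (nat \<Rightarrow> nat \<times> nat) \<Rightarrow> real" where
  "G T w = Phi m (mean m (gz m n \<sigma> \<rho>0)) (gz m n \<sigma> (traj (idx m n) \<alpha> \<rho>0 w T))"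

definition Ex :: "nat \<Rightarrow> real" where
  "Ex T = measure_pmf.expectation (PP Q T) (G T)"

definition pmin :: real where "pmin = Min (pmf Q ` E)"

lemma finE: "finite E" using finite_graph[OF conn] .
lemma finQ: "finite (set_pmf Q)" using finE QE by simp

lemma pmin_facts: "0 < pmin" "\<forall>e\<in>E. pmin \<le> pmf Q e" "(\<Sum>e\<in>E. pmf Q e) = 1"
proof -
  have Ene: "E \<noteq> {}" using graph_nonempty[OF conn m2] .
  show "0 < pmin" unfolding pmin_def using finE Ene QE by (subst Min_gr_iff) (auto simp: set_pmf_eq')
  show "\<forall>e\<in>E. pmin \<le> pmf Q e" unfolding pmin_def using finE by auto
  show "(\<Sum>e\<in>E. pmf Q e) = 1" using finE QE by (intro sum_pmf_eq_1) auto
qed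

lemma Ex_Suc: "Ex (Suc T) \<le> (1 - kappa m E \<alpha> pmin) * Ex T"
proof -
  let ?S = "set_pmf (PP Q T)"
  let ?c = "mean m (gz m n \<sigma> \<rho>0)"
  let ?x = "\<lambda>f. gz m n \<sigma> (traj (idx m n) \<alpha> \<rho>0 f T)"
  have finS: "finite ?S" using PP_finite[OF finQ] .
  have valid: "f t \<in> E" if "f \<in> ?S" "t < T" for f t
    using PP_support[OF that] QE by simp
  have GU: "G (Suc T) (f(T := y)) = Phi m ?c (upd \<alpha> (fst y) (snd y) (?x f))" if "f \<in> ?S" "y \<in> E" for f y
  proof -
    have "traj (idx m n) \<alpha> \<rho>0 (f(T := y)) T = traj (idx m n) \<alpha> \<rho>0 f T"
      by (rule traj_cong) auto
    then show ?thesis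
      using graph_edge[OF conn that(2)] unfolding G_def by (simp add: gz_step)
  qed
  have "Ex (Suc T) = measure_pmf.expectation (pair_pmf Q (PP Q T)) (\<lambda>(y, f). G (Suc T) (f(T := y)))"
    unfolding Ex_def PP_Suc by (simp add: case_prod_unfold)
  also have "\<dots> = (\<Sum>z\<in>E \<times> ?S. pmf (pair_pmf Q (PP Q T)) z * (\<lambda>(y, f). G (Suc T) (f(T := y))) z)"
    by (subst integral_measure_pmf[of "E \<times> ?S"]) (use finE finS QE in auto)
  also have "\<dots> = (\<Sum>y\<in>E. \<Sum>f\<in>?S. pmf Q y * pmf (PP Q T) f * G (Suc T) (f(T := y)))"
    unfolding sum.cartesian_product by (intro sum.cong refl) (auto simp: pmf_pair)
  also have "\<dots> = (\<Sum>f\<in>?S. pmf (PP Q T) f * (\<Sum>y\<in>E. pmf Q y * Phi m ?c (upd \<alpha> (fst y) (snd y) (?x f))))"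
    by (subst sum.swap) (auto simp: sum_distrib_left GU mult_ac intro!: sum.cong)
  also have "\<dots> \<le> (\<Sum>f\<in>?S. pmf (PP Q T) f * ((1 - kappa m E \<alpha> pmin) * Phi m ?c (?x f)))"
  proof (intro sum_mono mult_left_mono)
    fix f assume f: "f \<in> ?S"
    have mc: "mean m (?x f) = ?c"
      by (rule prefix_facts(1)[OF conn m2 a0 a1]) (use valid f in auto)
    show "(\<Sum>y\<in>E. pmf Q y * Phi m ?c (upd \<alpha> (fst y) (snd y) (?x f))) \<le> (1 - kappa m E \<alpha> pmin) * Phi m ?c (?x f)"
      using exp_contract[OF conn m2 a0 a1 pmin_facts(2,1,3), of "?x f"] mc by simp
  qed auto
  also have "\<dots> = (1 - kappa m E \<alpha> pmin) * Ex T"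
    unfolding Ex_def integral_PP[OF finQ] G_def by (simp add: sum_distrib_left mult_ac)
  finally show ?thesis .
qed

lemma Ex_nonneg: "0 \<le> Ex T"
  unfolding Ex_def G_def by (intro integral_nonneg_AE) auto

lemma Ex_bound: "Ex T \<le> (max (1 - kappa m E \<alpha> pmin) 0) ^ T * G 0 (\<lambda>_. (0,0))"
proof (induction T)
  case 0
  then show ?case unfolding Ex_def by (simp add: G_def)
next
  case (Suc T)
  let ?\<mu> = "max (1 - kappa m E \<alpha> pmin) 0"
  have "Ex (Suc T) \<le> (1 - kappa m E \<alpha> pmin) * Ex T" by (rule Ex_Suc)
  also have "\<dots> \<le> ?\<mu> * Ex T" using Ex_nonneg by (intro mult_right_mono) auto
  also have "\<dots> \<le> ?\<mu> * (?\<mu> ^ T * G 0 (\<lambda>_. (0,0)))" using Suc by (intro mult_left_mono) auto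
  finally show ?case by simp
qed

lemma random_part:
  "\<forall>\<delta>>0. \<forall>\<epsilon>>0. \<exists>T.
          measure_pmf.prob (Pi_pmf {..<T} (0,0) (\<lambda>_. Q))
            {w. (\<Sum>l<m. (cmod (zval m n \<sigma> (traj (idx m n) \<alpha> \<rho>0 w T) l
                               - (\<Sum>k<m. zval m n \<sigma> \<rho>0 k) / of_nat m))\<^sup>2)
                > \<epsilon> * (\<Sum>l<m. (cmod (zval m n \<sigma> \<rho>0 l
                               - (\<Sum>k<m. zval m n \<sigma> \<rho>0 k) / of_nat m))\<^sup>2)}
          < \<delta>"
proof (intro allI impI)
  fix \<delta> \<epsilon> :: real assume \<delta>: "0 < \<delta>" and \<epsilon>: "0 < \<epsilon>"
  let ?C = "(\<Sum>k<m. zval m n \<sigma> \<rho>0 k) / of_nat m"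
  define G0 where "G0 = Phi m (mean m (gz m n \<sigma> \<rho>0)) (gz m n \<sigma> \<rho>0)"
  have setG: "{w. (\<Sum>l<m. (cmod (zval m n \<sigma> (traj (idx m n) \<alpha> \<rho>0 w T) l - ?C))\<^sup>2)
                > \<epsilon> * (\<Sum>l<m. (cmod (zval m n \<sigma> \<rho>0 l - ?C))\<^sup>2)} = {w. G T w > \<epsilon> * G0}" for T
    unfolding G_def G0_def mean_gz Phi_gz ..
  have G00: "G 0 w = G0" for w unfolding G_def G0_def by simp
  have G0nn: "0 \<le> G0" unfolding G0_def by simp
  show "\<exists>T. measure_pmf.prob (PP Q T)
            {w. (\<Sum>l<m. (cmod (zval m n \<sigma> (traj (idx m n) \<alpha> \<rho>0 w T) l - ?C))\<^sup>2)
                > \<epsilon> * (\<Sum>l<m. (cmod (zval m n \<sigma> \<rho>0 l - ?C))\<^sup>2)} < \<delta>"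
  proof (cases "G0 = 0")
    case True
    have "{w. G 0 w > \<epsilon> * G0} = {}" using True G00 by simp
    then show ?thesis using \<delta> unfolding setG by (intro exI[of _ 0]) simp
  next
    case False
    then have G0p: "0 < G0" using G0nn by simp
    define \<mu> where "\<mu> = max (1 - kappa m E \<alpha> pmin) 0"
    have \<mu>0: "0 \<le> \<mu>" and \<mu>1: "\<mu> < 1"
      using kappa_pos[OF conn m2 a0 a1 pmin_facts(1)] unfolding \<mu>_def by auto
    have "(\<lambda>T. \<mu> ^ T) \<longlonglongrightarrow> 0" using \<mu>0 \<mu>1 by (intro LIMSEQ_power_zero) auto
    then have "eventually (\<lambda>T. \<mu> ^ T < \<epsilon> * \<delta>) sequentially"
      using \<epsilon> \<delta> by (intro order_tendstoD(2)) auto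
    then obtain T where T: "\<mu> ^ T < \<epsilon> * \<delta>" by (auto simp: eventually_sequentially)
    let ?M = "measure_pmf (PP Q T)"
    have int: "integrable ?M (G T)" by (rule integrable_measure_pmf_finite[OF PP_finite[OF finQ]])
    have "measure_pmf.prob (PP Q T) {w. G T w > \<epsilon> * G0} \<le> measure_pmf.prob (PP Q T) {w \<in> space ?M. G T w \<ge> \<epsilon> * G0}"
      by (intro measure_pmf.finite_measure_mono) auto
    also have "\<dots> \<le> (\<integral>w. G T w \<partial>?M) / (\<epsilon> * G0)"
      by (rule integral_Markov_inequality_measure[OF int, of "{}"]) (use \<epsilon> G0p in \<open>auto simp: G_def\<close>)
    also have "\<dots> = Ex T / (\<epsilon> * G0)" unfolding Ex_def ..
    also have "\<dots> \<le> (\<mu> ^ T * G0) / (\<epsilon> * G0)"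
      using Ex_bound[of T] G00 \<epsilon> G0p unfolding \<mu>_def by (intro divide_right_mono) auto
    also have "\<dots> = \<mu> ^ T / \<epsilon>" using G0p by simp
    also have "\<dots> < \<delta>" using T \<epsilon> by (simp add: divide_less_eq mult.commute)
    finally show ?thesis unfolding setG by blast
  qed
qed

end

theorem corollary1:
  fixes n m :: nat and E :: "(nat \<times> nat) set" and \<alpha> :: real
    and \<sigma> :: "nat \<Rightarrow> nat \<Rightarrow> complex" and \<rho>0 :: cop
  assumes "2 \<le> n" and "2 \<le> m" and "connected_graph m E"
    and "0 < \<alpha>" and "\<alpha> < 1"
    and "self_adjoint_mat n \<sigma>" and "density_op (idx m n) \<rho>0"
  shows
   "(\<forall>es. distinct es \<and> set es = E \<longrightarrow>
       (\<forall>l<m. (\<lambda>t. zval m n \<sigma> (traj (idx m n) \<alpha> \<rho>0 (\<lambda>s. es ! (s mod length es)) t) l)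
                \<longlonglongrightarrow> (\<Sum>k<m. zval m n \<sigma> \<rho>0 k) / of_nat m))
    \<and> (\<forall>q. (\<forall>e\<in>E. 0 < q e) \<and> (\<Sum>e\<in>E. q e) = 1 \<longrightarrow>
       (\<forall>l<m. (\<lambda>t. zval m n \<sigma> (exp_traj (idx m n) \<alpha> q E \<rho>0 t) l)
                \<longlonglongrightarrow> (\<Sum>k<m. zval m n \<sigma> \<rho>0 k) / of_nat m))
    \<and> (\<forall>Q :: (nat \<times> nat) pmf. set_pmf Q = E \<longrightarrow>
       (\<forall>\<delta>>0. \<forall>\<epsilon>>0. \<exists>T.
          measure_pmf.prob (Pi_pmf {..<T} (0,0) (\<lambda>_. Q))
            {w. (\<Sum>l<m. (cmod (zval m n \<sigma> (traj (idx m n) \<alpha> \<rho>0 w T) l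
                               - (\<Sum>k<m. zval m n \<sigma> \<rho>0 k) / of_nat m))\<^sup>2)
                > \<epsilon> * (\<Sum>l<m. (cmod (zval m n \<sigma> \<rho>0 l
                               - (\<Sum>k<m. zval m n \<sigma> \<rho>0 k) / of_nat m))\<^sup>2)}
          < \<delta>))"
proof -
  note conn = assms(3) and m2 = assms(2) and a0 = assms(4) and a1 = assms(5)
  have P1: "\<forall>es. distinct es \<and> set es = E \<longrightarrow>
       (\<forall>l<m. (\<lambda>t. zval m n \<sigma> (traj (idx m n) \<alpha> \<rho>0 (\<lambda>s. es ! (s mod length es)) t) l)
                \<longlonglongrightarrow> (\<Sum>k<m. zval m n \<sigma> \<rho>0 k) / of_nat m)"
    using periodic_part[OF conn m2 a0 a1] by blast
  have P2: "\<forall>q. (\<forall>e\<in>E. 0 < q e) \<and> (\<Sum>e\<in>E. q e) = 1 \<longrightarrow>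
       (\<forall>l<m. (\<lambda>t. zval m n \<sigma> (exp_traj (idx m n) \<alpha> q E \<rho>0 t) l)
                \<longlonglongrightarrow> (\<Sum>k<m. zval m n \<sigma> \<rho>0 k) / of_nat m)"
    using expected_part[OF conn m2 a0 a1] by blast
  have P3: "\<forall>Q :: (nat \<times> nat) pmf. set_pmf Q = E \<longrightarrow>
       (\<forall>\<delta>>0. \<forall>\<epsilon>>0. \<exists>T.
          measure_pmf.prob (Pi_pmf {..<T} (0,0) (\<lambda>_. Q))
            {w. (\<Sum>l<m. (cmod (zval m n \<sigma> (traj (idx m n) \<alpha> \<rho>0 w T) l
                               - (\<Sum>k<m. zval m n \<sigma> \<rho>0 k) / of_nat m))\<^sup>2)
                > \<epsilon> * (\<Sum>l<m. (cmod (zval m n \<sigma> \<rho>0 l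
                               - (\<Sum>k<m. zval m n \<sigma> \<rho>0 k) / of_nat m))\<^sup>2)}
          < \<delta>)"
    using random_part[OF conn m2 a0 a1] by blast
  show ?thesis using P1 P2 P3 by blast
qed

end
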